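(* Let $\mathscr{X},\mathscr{Y},\mathscr{Z}$ be real Banach spaces with duals $\mathscr{X}^*,\mathscr{Y}^*,\mathscr{Z}^*$, let $A:\mathscr{X}\to\mathscr{Y}$, $B:\mathscr{X}\to\mathscr{Z}$ be bounded linear operators with adjoints $A^*,B^*$, let $\mathbf{y}_0\in\mathscr{Y}$, $\rho>0$, and $p,p'\in(1,+\infty)$ with $1/p+1/p'=1$. Suppose $\hat{\mathbf{x}}\in\mathscr{X}$ satisfies $$(\|\mathbf{y}_0-A\hat{\mathbf{x}}\|^p_{\mathscr{Y}}+\rho\|B\hat{\mathbf{x}}\|^p_{\mathscr{Z}})^{1/p}=\inf\{(\|\mathbf{y}_0-A\mathbf{x}\|^p_{\mathscr{Y}}+\rho\|B\mathbf{x}\|^p_{\mathscr{Z}})^{1/p}:\mathbf{x}\in\mathscr{X}\}>0,$$ and $(\hat\lambda,\hat\mu)\in\mathscr{Y}^*\times\mathscr{Z}^*$ satisfies $(\|\hat\lambda\|^{p'}_{\mathscr{Y}^*}+\|\hat\mu\|^{p'}_{\mathscr{Z}^*})^{1/p'}=1$, $A^*\hat\lambda+\rho^{1/p}B^*\hat\mu=0$ and $$\langle\mathbf{y}_0,\hat\lambda\rangle_{\mathscr{Y}}=\sup\{|\langle\mathbf{y}_0,\lambda\rangle_{\mathscr{Y}}|:\ (\|\lambda\|^{p'}_{\mathscr{Y}^*}+\|\mu\|^{p'}_{\mathscr{Z}^*})^{1/p'}\le1,\ A^*\lambda+\rho^{1/p}B^*\mu=0\}>0.$$ Then: 1. If $\hat\mu=0$,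 then $B\hat{\mathbf{x}}=0$ and $\|\mathbf{y}_0-A\hat{\mathbf{x}}\|_{\mathscr{Y}}=\langle\mathbf{y}_0,\hat\lambda\rangle_{\mathscr{Y}}$. 2. If $\hat\lambda\neq0$ and $\hat\mu\ne0$, then $\mathbf{y}_0-A\hat{\mathbf{x}}\ne0$, $B\hat{\mathbf{x}}\neq0$, $\alpha(\mathbf{y}_0-A\hat{\mathbf{x}})$ is norming for $\hat\lambda$ and $\beta B\hat{\mathbf{x}}$ is norming for $\hat\mu$, where $\alpha:=(1+\|\hat\mu\|^{p'}_{\mathscr{Z}^*}/\|\hat\lambda\|^{p'}_{\mathscr{Y}^*})^{1/p}/\langle\mathbf{y}_0,\hat\lambda\rangle_{\mathscr{Y}}$ and $\beta:=-\rho^{1/p}(1+\|\hat\lambda\|^{p'}_{\mathscr{Y}^*}/\|\hat\mu\|^{p'}_{\mathscr{Z}^*})^{1/p}/\langle\mathbf{y}_0,\hat\lambda\rangle_{\mathscr{Y}}$.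
   Context: $\langle\mathbf{y},\lambda\rangle_{\mathscr{Y}}:=\lambda(\mathbf{y})$. For $\lambda\in\mathscr{Y}^*$, a vector $\mathbf{y}\in\mathscr{Y}$ is norming for $\lambda$ if $\|\mathbf{y}\|_{\mathscr{Y}}=1$ and $\langle\mathbf{y},\lambda\rangle_{\mathscr{Y}}=\|\lambda\|_{\mathscr{Y}^*}$; similarly for $\mathscr{Z}$. *)

theory Defs
  imports "HOL-Analysis.Analysis"
begin

(* The dual of a real normed space Y is the type of bounded linear functionals Y =>L real, with the operator norm. *)

definition dual_pair :: "'a::real_normed_vector \<Rightarrow> ('a \<Rightarrow>\<^sub>L real) \<Rightarrow> real" where
  "dual_pair y l = blinfun_apply l y"

definition adjoint_op ::
  "('a::real_normed_vector \<Rightarrow>\<^sub>L 'b::real_normed_vector) \<Rightarrow> ('b \<Rightarrow>\<^sub>L real) \<Rightarrow> ('a \<Rightarrow>\<^sub>L real)" where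
  "adjoint_op A l = l o\<^sub>L A"

definition norming :: "'a::real_normed_vector \<Rightarrow> ('a \<Rightarrow>\<^sub>L real) \<Rightarrow> bool" where
  "norming y l \<longleftrightarrow> norm y = 1 \<and> dual_pair y l = norm l"

end

theory Submission
  imports Defs
begin


definition pn :: "real \<Rightarrow> real \<Rightarrow> real \<Rightarrow> real" where
  "pn p u v = (u powr p + v powr p) powr (1 / p)"

lemma pn_nonneg: "pn p u v \<ge> 0"
  by (simp add: pn_def)

lemma pn_powr: assumes "p > 0" shows "pn p u v powr p = u powr p + v powr p"
  using assms by (simp add: pn_def powr_powr)

lemma pn_zero_iff: assumes "p > 0" "u \<ge> 0" "v \<ge> 0"
  shows "pn p u v = 0 \<longleftrightarrow> u = 0 \<and> v = 0"
proof -
  have "pn p u v = 0 \<longleftrightarrow> u powr p + v powr p = 0" by (simp add: pn_def)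
  also have "\<dots> \<longleftrightarrow> u powr p = 0 \<and> v powr p = 0"
    by (metis add.right_neutral add_nonneg_eq_0_iff powr_ge_zero)
  also have "\<dots> \<longleftrightarrow> u = 0 \<and> v = 0" by simp
  finally show ?thesis .
qed

lemma pn_mono: assumes "p > 0" "0 \<le> u" "u \<le> u'" "0 \<le> v" "v \<le> v'"
  shows "pn p u v \<le> pn p u' v'"
  unfolding pn_def
  by (intro powr_mono2 add_mono) (use assms in auto)

lemma pn_zero2: assumes "p > 0" "u \<ge> 0" shows "pn p u 0 = u"
  using assms by (simp add: pn_def powr_powr)

lemma pn_hom: assumes "p > 0" "t \<ge> 0" "u \<ge> 0" "v \<ge> 0"
  shows "pn p (t * u) (t * v) = t * pn p u v"
proof -
  have "(t * u) powr p + (t * v) powr p = t powr p * (u powr p + v powr p)"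
    using assms by (simp add: powr_mult algebra_simps)
  then show ?thesis using assms
    by (simp add: pn_def powr_mult powr_powr)
qed

lemma holder2:
  assumes p: "p > 1" and q: "q > 1" and c: "1/p + 1/q = 1"
    and "s \<ge> 0" "t \<ge> 0" "u \<ge> 0" "v \<ge> 0"
  shows "s * u + t * v \<le> pn q s t * pn p u v"
proof (cases "pn q s t = 0 \<or> pn p u v = 0")
  case True
  then show ?thesis using assms pn_zero_iff[of q s t] pn_zero_iff[of p u v] by auto
next
  case False
  define A where "A = pn q s t"
  define B where "B = pn p u v"
  have A: "A > 0" and B: "B > 0" using False pn_nonneg unfolding A_def B_def
    by (metis less_eq_real_def)+
  have Aq: "A powr q = s powr q + t powr q" using q by (simp add: A_def pn_powr)
  have Bp: "B powr p = u powr p + v powr p" using p by (simp add: B_def pn_powr)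
  have y1: "(s/A) * (u/B) \<le> (s/A) powr q / q + (u/B) powr p / p"
    using Youngs_inequality[of q p "s/A" "u/B"] assms A B by (simp add: add.commute)
  have y2: "(t/A) * (v/B) \<le> (t/A) powr q / q + (v/B) powr p / p"
    using Youngs_inequality[of q p "t/A" "v/B"] assms A B by (simp add: add.commute)
  have "(s/A) powr q / q + (u/B) powr p / p + ((t/A) powr q / q + (v/B) powr p / p)
      = (s powr q + t powr q) / A powr q / q + (u powr p + v powr p) / B powr p / p"
    using assms A B by (simp add: powr_divide add_divide_distrib)
  also have "\<dots> = 1/q + 1/p" using A B by (simp add: Aq[symmetric] Bp[symmetric])
  also have "\<dots> = 1" using c by simp
  finally have "(s/A) * (u/B) + (t/A) * (v/B) \<le> 1" using y1 y2 by linarith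
  then have "(s * u + t * v) / (A * B) \<le> 1"
    by (metis add_divide_distrib times_divide_times_eq)
  then show ?thesis using A B by (simp add: A_def B_def field_simps)
qed

lemma witness:
  assumes p: "p > 1" and q: "q > 1" and c: "1/p + 1/q = 1"
    and u: "u \<ge> 0" and v: "v \<ge> 0" and B: "pn p u v > 0"
  shows "\<exists>s t. s \<ge> 0 \<and> t \<ge> 0 \<and> pn q s t = 1 \<and> s * u + t * v = pn p u v"
proof -
  define B' where "B' = pn p u v"
  have Bp: "B' powr p = u powr p + v powr p" using p by (simp add: B'_def pn_powr)
  have pq: "(p - 1) * q = p" using c p q by (simp add: field_simps)
  define s where "s = (u/B') powr (p-1)"
  define t where "t = (v/B') powr (p-1)"
  have sq: "s powr q = (u/B') powr p" unfolding s_def using powr_powr pq by simp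
  have tq: "t powr q = (v/B') powr p" unfolding t_def using powr_powr pq by simp
  have "s powr q + t powr q = (u powr p + v powr p) / B' powr p"
    using u v B by (simp add: sq tq powr_divide add_divide_distrib B'_def)
  also have "\<dots> = 1" using Bp B B'_def by (simp flip: Bp)
  finally have 1: "pn q s t = 1" by (simp add: pn_def)
  have su: "s * u = B' * (u/B') powr p"
  proof -
    have e1: "(u/B') powr 1 = u/B'" using u B B'_def by simp
    have "s * u = B' * ((u/B') powr (p-1) * (u/B'))"
      using u B by (simp add: s_def B'_def)
    then have "s * u = B' * ((u/B') powr (p-1) * (u/B') powr 1)" by (simp only: e1)
    also have "\<dots> = B' * (u/B') powr p" by (metis powr_add diff_add_cancel)
    finally show ?thesis .
  qed
  have tv: "t * v = B' * (v/B') powr p"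
  proof -
    have e1: "(v/B') powr 1 = v/B'" using v B B'_def by simp
    have "t * v = B' * ((v/B') powr (p-1) * (v/B'))"
      using v B by (simp add: t_def B'_def)
    then have "t * v = B' * ((v/B') powr (p-1) * (v/B') powr 1)" by (simp only: e1)
    also have "\<dots> = B' * (v/B') powr p" by (metis powr_add diff_add_cancel)
    finally show ?thesis .
  qed
  have "s * u + t * v = B' * ((u powr p + v powr p) / B' powr p)"
    using u v B by (simp add: su tv powr_divide add_divide_distrib B'_def algebra_simps)
  also have "\<dots> = B'" using Bp B B'_def by (simp flip: Bp)
  finally show ?thesis using 1 B'_def s_def t_def by (intro exI[of _ s] exI[of _ t]) auto
qed

lemma dual_bound:
  assumes p: "p > 1" and q: "q > 1" and c: "1/p + 1/q = 1"
    and a: "a \<ge> 0" and b: "b \<ge> 0"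
    and H: "\<And>s t. s \<ge> 0 \<Longrightarrow> t \<ge> 0 \<Longrightarrow> s * a + t * b \<le> pn p s t"
  shows "pn q a b \<le> 1"
proof (cases "pn q a b = 0")
  case False
  then have "pn q a b > 0" using pn_nonneg by (metis less_eq_real_def)
  then obtain s t where "s \<ge> 0" "t \<ge> 0" "pn p s t = 1" "s * a + t * b = pn q a b"
    using witness[of q p a b] assms by (auto simp: add.commute)
  then show ?thesis using H by (metis mult.commute)
qed simp

lemma minkowski2:
  assumes p: "p > 1" and q: "q > 1" and c: "1/p + 1/q = 1"
    and "u1 \<ge> 0" "u2 \<ge> 0" "v1 \<ge> 0" "v2 \<ge> 0"
  shows "pn p (u1 + u2) (v1 + v2) \<le> pn p u1 v1 + pn p u2 v2"
proof (cases "pn p (u1 + u2) (v1 + v2) = 0")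
  case True then show ?thesis using pn_nonneg by (metis add_nonneg_nonneg)
next
  case False
  then have "pn p (u1 + u2) (v1 + v2) > 0" using pn_nonneg by (metis less_eq_real_def)
  then obtain s t where st: "s \<ge> 0" "t \<ge> 0" "pn q s t = 1"
      "s * (u1 + u2) + t * (v1 + v2) = pn p (u1 + u2) (v1 + v2)"
    using witness[of p q "u1+u2" "v1+v2"] assms by auto
  have "s * u1 + t * v1 \<le> pn p u1 v1" using holder2[of p q s t u1 v1] assms st by simp
  moreover have "s * u2 + t * v2 \<le> pn p u2 v2" using holder2[of p q s t u2 v2] assms st by simp
  ultimately show ?thesis using st(4) by (simp add: algebra_simps)
qed

lemma ln_less_minus_one: "(0::real) < x \<Longrightarrow> x \<noteq> 1 \<Longrightarrow> ln x < x - 1"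
proof -
  assume "0 < x" "x \<noteq> 1"
  then have "ln x \<le> x - 1" using ln_le_minus_one by blast
  moreover have "ln x \<noteq> x - 1" using ln_eq_minus_one \<open>0 < x\<close> \<open>x \<noteq> 1\<close> by blast
  ultimately show ?thesis by linarith
qed

lemma young_eq:
  fixes p q a U :: real
  assumes p: "p > 1" and q: "q > 1" and c: "1/p + 1/q = 1"
    and a: "a > 0" and U: "U \<ge> 0" and eq: "a * U = a powr q / q + U powr p / p"
  shows "U powr p = a powr q"
proof (rule ccontr)
  assume ne: "U powr p \<noteq> a powr q"
  show False
  proof (cases "U = 0")
    case True
    have "a powr q / q > 0" using a q by (intro divide_pos_pos) auto
    then show False using eq True a q by simp
  next
    case False
    then have U0: "U > 0" using U by simp
    define X where "X = a powr q"
    define Y where "Y = U powr p"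
    have X: "X > 0" and Y: "Y > 0" using a U0 by (auto simp: X_def Y_def)
    define m where "m = X / q + Y / p"
    have m: "m > 0" using X Y p q unfolding m_def by (intro add_pos_pos divide_pos_pos) auto
    have XY: "X \<noteq> Y" using ne X_def Y_def by simp
    have l1: "ln (X/m) \<le> X/m - 1" using X m by (intro ln_le_minus_one) simp
    have l2: "ln (Y/m) \<le> Y/m - 1" using Y m by (intro ln_le_minus_one) simp
    have strict: "X/m \<noteq> 1 \<or> Y/m \<noteq> 1" using XY m by auto
    have "(1/q) * ln (X/m) + (1/p) * ln (Y/m) < (1/q) * (X/m - 1) + (1/p) * (Y/m - 1)"
    proof (cases "X/m \<noteq> 1")
      case True
      then have "ln (X/m) < X/m - 1" using X m by (intro ln_less_minus_one) auto
      then show ?thesis using l2 p q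
        by (smt (verit) mult_le_cancel_left_pos mult_less_cancel_left_pos divide_pos_pos zero_less_one)
    next
      case False
      then have "ln (Y/m) < Y/m - 1" using Y m strict by (intro ln_less_minus_one) auto
      then show ?thesis using l1 p q
        by (smt (verit) mult_le_cancel_left_pos mult_less_cancel_left_pos divide_pos_pos zero_less_one)
    qed
    also have "\<dots> = (X/q + Y/p) / m - (1/q + 1/p)" using m p q by (simp add: field_simps)
    also have "\<dots> = m / m - (1/q + 1/p)" unfolding m_def by simp
    also have "\<dots> = 0" using m c by simp
    finally have neg: "(1/q) * ln (X/m) + (1/p) * ln (Y/m) < 0" .
    have "(1/q) * ln (X/m) + (1/p) * ln (Y/m) = ln (X powr (1/q)) + ln (Y powr (1/p)) - ln m"
    proof -
      have "ln m / p + ln m / q = ln m * (1/p + 1/q)" by (simp add: algebra_simps)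
      then have lm: "ln m / p + ln m / q = ln m" using c by simp
      show ?thesis using X Y m lm by (simp add: ln_div ln_powr algebra_simps)
    qed
    also have "X powr (1/q) = a" using a q by (simp add: X_def powr_powr)
    also have "Y powr (1/p) = U" using U0 p by (simp add: Y_def powr_powr)
    finally have "ln a + ln U < ln m" using neg by simp
    then have "ln (a * U) < ln m" using a U0 by (simp add: ln_mult)
    then have "a * U < m" using a U0 m by simp
    then show False using eq by (simp add: m_def X_def Y_def)
  qed
qed



definition lsub :: "'a::real_vector set \<Rightarrow> bool" where
  "lsub S \<longleftrightarrow> 0 \<in> S \<and> (\<forall>x\<in>S. \<forall>y\<in>S. x + y \<in> S) \<and> (\<forall>c. \<forall>x\<in>S. c *\<^sub>R x \<in> S)"

lemma lsub_diff: "lsub S \<Longrightarrow> x \<in> S \<Longrightarrow> y \<in> S \<Longrightarrow> x - y \<in> S"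
  unfolding lsub_def by (metis scaleR_minus1_left uminus_add_conv_diff add.commute)

lemma lsub_0: "lsub S \<Longrightarrow> 0 \<in> S" unfolding lsub_def by blast
lemma lsub_add: "lsub S \<Longrightarrow> x \<in> S \<Longrightarrow> y \<in> S \<Longrightarrow> x + y \<in> S" unfolding lsub_def by blast
lemma lsub_scale: "lsub S \<Longrightarrow> x \<in> S \<Longrightarrow> c *\<^sub>R x \<in> S" unfolding lsub_def by blast

lemma hahn_banach_graph:
  fixes q :: "'v::real_vector \<Rightarrow> real" and g0 :: "('v \<times> real) set"
  assumes subadd: "\<And>x y. q (x + y) \<le> q x + q y"
    and hom: "\<And>t x. t \<ge> 0 \<Longrightarrow> q (t *\<^sub>R x) = t * q x"
    and g0: "lsub g0" and fun0: "\<And>a. (0, a) \<in> g0 \<Longrightarrow> a = 0"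
    and bd0: "\<And>x a. (x, a) \<in> g0 \<Longrightarrow> a \<le> q x"
  shows "\<exists>F. linear F \<and> (\<forall>x a. (x, a) \<in> g0 \<longrightarrow> F x = a) \<and> (\<forall>x. F x \<le> q x)"
proof -
  define \<A> where "\<A> = {g. lsub g \<and> g0 \<subseteq> g \<and> (\<forall>a. (0, a) \<in> g \<longrightarrow> a = 0) \<and> (\<forall>x a. (x, a) \<in> g \<longrightarrow> a \<le> q x)}"
  have "g0 \<in> \<A>" using g0 fun0 bd0 unfolding \<A>_def by blast
  then have ne: "\<A> \<noteq> {}" by blast
  have "\<exists>M\<in>\<A>. \<forall>X\<in>\<A>. M \<subseteq> X \<longrightarrow> X = M"
  proof (rule subset_Zorn_nonempty[OF ne])
    fix C assume Cne: "C \<noteq> {}" and ch: "subset.chain \<A> C"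
    have CA: "C \<subseteq> \<A>" and tot: "\<And>X Y. X \<in> C \<Longrightarrow> Y \<in> C \<Longrightarrow> X \<subseteq> Y \<or> Y \<subseteq> X"
      using ch unfolding subset_chain_def by auto
    have memA: "lsub X \<and> g0 \<subseteq> X \<and> (\<forall>a. (0, a) \<in> X \<longrightarrow> a = 0) \<and> (\<forall>x a. (x, a) \<in> X \<longrightarrow> a \<le> q x)"
      if "X \<in> C" for X using CA that unfolding \<A>_def by auto
    have "lsub (\<Union>C)"
      unfolding lsub_def
    proof (intro conjI ballI allI)
      obtain X where "X \<in> C" using Cne by blast
      then show "0 \<in> \<Union>C" using memA lsub_0 by blast
    next
      fix x y assume "x \<in> \<Union>C" "y \<in> \<Union>C"
      then obtain X Y where XY: "X \<in> C" "Y \<in> C" "x \<in> X" "y \<in> Y" by blast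
      obtain Z where Z: "Z \<in> C" "x \<in> Z" "y \<in> Z"
        using tot[OF XY(1,2)] XY by blast
      have "lsub Z" using memA[OF Z(1)] by blast
      then have "x + y \<in> Z" using Z lsub_add by blast
      then show "x + y \<in> \<Union>C" using Z(1) by blast
    next
      fix c x assume "x \<in> \<Union>C"
      then obtain X where X: "X \<in> C" "x \<in> X" by blast
      have "lsub X" using memA[OF X(1)] by blast
      then have "c *\<^sub>R x \<in> X" using X lsub_scale by blast
      then show "c *\<^sub>R x \<in> \<Union>C" using X(1) by blast
    qed
    moreover have "g0 \<subseteq> \<Union>C"
    proof -
      obtain X where "X \<in> C" using Cne by blast
      then show ?thesis using memA by blast
    qed
    moreover have "\<forall>a. (0, a) \<in> \<Union>C \<longrightarrow> a = 0" using memA by blast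
    moreover have "\<forall>x a. (x, a) \<in> \<Union>C \<longrightarrow> a \<le> q x" using memA by blast
    ultimately show "\<Union>C \<in> \<A>" unfolding \<A>_def by blast
  qed
  then obtain G where GA: "G \<in> \<A>" and Gmax: "\<And>X. X \<in> \<A> \<Longrightarrow> G \<subseteq> X \<Longrightarrow> X = G" by blast
  have Gs: "lsub G" and g0G: "g0 \<subseteq> G" and Gf: "\<And>a. (0, a) \<in> G \<Longrightarrow> a = 0"
    and Gb: "\<And>x a. (x, a) \<in> G \<Longrightarrow> a \<le> q x"
    using GA unfolding \<A>_def by auto
  have Gadd: "(x + y, a + b) \<in> G" if "(x, a) \<in> G" "(y, b) \<in> G" for x y a b
    using lsub_add[OF Gs that] by simp
  have Gscale: "(c *\<^sub>R x, c * a) \<in> G" if "(x, a) \<in> G" for c x a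
    using lsub_scale[OF Gs that, of c] by simp
  have G0: "(0, 0) \<in> G" using lsub_0[OF Gs] by (simp add: zero_prod_def)
  have Gfun: "a = b" if "(x, a) \<in> G" "(x, b) \<in> G" for x a b
  proof -
    have "(x, a) - (x, b) \<in> G" using lsub_diff[OF Gs that] .
    then have "(0, a - b) \<in> G" by simp
    then show ?thesis using Gf by fastforce
  qed
  have total: "\<exists>a. (x0, a) \<in> G" for x0
  proof (rule ccontr)
    assume nx: "\<nexists>a. (x0, a) \<in> G"
    define S where "S = {a - q (x - x0) | x a. (x, a) \<in> G}"
    have key: "a - q (x - x0) \<le> q (z + x0) - b" if "(x, a) \<in> G" "(z, b) \<in> G" for x a z b
    proof -
      have "a + b \<le> q (x + z)" using Gb Gadd that by blast
      also have "x + z = (x - x0) + (z + x0)" by simp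
      also have "q \<dots> \<le> q (x - x0) + q (z + x0)" by (rule subadd)
      finally show ?thesis by simp
    qed
    have Sne: "S \<noteq> {}" using G0 unfolding S_def by blast
    have Sbd: "\<And>s. s \<in> S \<Longrightarrow> s \<le> q (0 + x0) - 0" using key G0 unfolding S_def by blast
    define c0 where "c0 = Sup S"
    have c0u: "a - q (x - x0) \<le> c0" if "(x, a) \<in> G" for x a
      unfolding c0_def using Sbd that by (intro cSup_upper) (auto simp: S_def bdd_above_def)
    have c0l: "c0 \<le> q (z + x0) - b" if "(z, b) \<in> G" for z b
      unfolding c0_def using Sne key that by (intro cSup_least) (auto simp: S_def)
    define G' where "G' = {(x + t *\<^sub>R x0, a + t * c0) | x a t. (x, a) \<in> G}"
    have GG': "G \<subseteq> G'" unfolding G'_def by force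
    have "(x0, c0) = (0 + 1 *\<^sub>R x0, 0 + 1 * c0)" by simp
    then have "(x0, c0) \<in> G'" unfolding G'_def using G0 by blast
    have "G' \<in> \<A>"
      unfolding \<A>_def
    proof (intro CollectI conjI allI impI)
      show "lsub G'" unfolding lsub_def
      proof (intro conjI ballI allI)
        show "0 \<in> G'" unfolding G'_def using G0 by (force simp: zero_prod_def)
      next
        fix u w assume "u \<in> G'" "w \<in> G'"
        then obtain x a t y b s where u: "u = (x + t *\<^sub>R x0, a + t * c0)" "(x, a) \<in> G"
          and w: "w = (y + s *\<^sub>R x0, b + s * c0)" "(y, b) \<in> G"
          unfolding G'_def by blast
        have "u + w = ((x + y) + (t + s) *\<^sub>R x0, (a + b) + (t + s) * c0)"
          using u w by (simp add: algebra_simps scaleR_add_left)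
        then show "u + w \<in> G'" unfolding G'_def using Gadd u(2) w(2) by blast
      next
        fix c u assume "u \<in> G'"
        then obtain x a t where u: "u = (x + t *\<^sub>R x0, a + t * c0)" "(x, a) \<in> G"
          unfolding G'_def by blast
        have "c *\<^sub>R u = (c *\<^sub>R x + (c * t) *\<^sub>R x0, c * a + (c * t) * c0)"
          using u by (simp add: algebra_simps scaleR_add_right)
        then show "c *\<^sub>R u \<in> G'" unfolding G'_def using Gscale u(2) by blast
      qed
    next
      show "g0 \<subseteq> G'" using g0G GG' by blast
    next
      fix a0 assume "(0, a0) \<in> G'"
      then obtain x a t where e: "0 = x + t *\<^sub>R x0" "a0 = a + t * c0" "(x, a) \<in> G"
        unfolding G'_def by blast
      show "a0 = 0"
      proof (cases "t = 0")
        case True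
        then show ?thesis using e Gf by simp
      next
        case False
        have "x0 = (- 1 / t) *\<^sub>R x" using e(1) False
          by (simp add: eq_neg_iff_add_eq_0[symmetric] algebra_simps)
        then have "(x0, (- 1 / t) * a) \<in> G" using Gscale[OF e(3), of "- 1 / t"] by simp
        then show ?thesis using nx by blast
      qed
    next
      fix u a0 assume "(u, a0) \<in> G'"
      then obtain x a t where e: "u = x + t *\<^sub>R x0" "a0 = a + t * c0" "(x, a) \<in> G"
        unfolding G'_def by blast
      show "a0 \<le> q u"
      proof (cases "t = 0")
        case True then show ?thesis using e Gb by simp
      next
        case False
        show ?thesis
        proof (cases "t > 0")
          case True
          have "((1/t) *\<^sub>R x, (1/t) * a) \<in> G" using Gscale e(3) by blast
          then have "c0 \<le> q ((1/t) *\<^sub>R x + x0) - (1/t) * a" by (rule c0l)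
          then have "t * c0 \<le> t * q ((1/t) *\<^sub>R x + x0) - a"
            using True by (simp add: field_simps)
          also have "t * q ((1/t) *\<^sub>R x + x0) = q (t *\<^sub>R ((1/t) *\<^sub>R x + x0))"
            using True hom by simp
          also have "t *\<^sub>R ((1/t) *\<^sub>R x + x0) = u" using True e(1) by (simp add: scaleR_add_right)
          finally show ?thesis using e by simp
        next
          case False
          define s where "s = - t"
          have s: "s > 0" using False \<open>t \<noteq> 0\<close> s_def by simp
          have "((1/s) *\<^sub>R x, (1/s) * a) \<in> G" using Gscale e(3) by blast
          then have "(1/s) * a - q ((1/s) *\<^sub>R x - x0) \<le> c0" by (rule c0u)
          then have "a - s * q ((1/s) *\<^sub>R x - x0) \<le> s * c0"
            using s by (simp add: field_simps)
          also have "s * q ((1/s) *\<^sub>R x - x0) = q (s *\<^sub>R ((1/s) *\<^sub>R x - x0))"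
            using s hom by simp
          also have "s *\<^sub>R ((1/s) *\<^sub>R x - x0) = u" using s e(1) s_def by (simp add: scaleR_diff_right)
          finally show ?thesis using e s_def by simp
        qed
      qed
    qed
    then have "G' = G" using Gmax GG' by blast
    then show False using \<open>(x0, c0) \<in> G'\<close> nx by blast
  qed
  define F where "F x = (SOME a. (x, a) \<in> G)" for x
  have FG: "(x, F x) \<in> G" for x unfolding F_def using total by (metis someI_ex)
  have Fa: "F x = a" if "(x, a) \<in> G" for x a using Gfun FG that by blast
  have "linear F"
  proof (rule linearI)
    fix x y show "F (x + y) = F x + F y" using Fa Gadd FG by blast
  next
    fix c x show "F (c *\<^sub>R x) = c *\<^sub>R F x" using Fa Gscale FG by simp
  qed
  moreover have "\<forall>x a. (x, a) \<in> g0 \<longrightarrow> F x = a" using Fa g0G by blast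
  moreover have "\<forall>x. F x \<le> q x" using Gb FG by blast
  ultimately show ?thesis by blast
qed

lemma approx_norm:
  fixes f :: "'a::real_normed_vector \<Rightarrow>\<^sub>L real"
  assumes e: "e > 0"
  shows "\<exists>y. norm y \<le> 1 \<and> norm f - e < f y"
proof (rule ccontr)
  assume "\<not> ?thesis"
  then have H: "\<And>y. norm y \<le> 1 \<Longrightarrow> f y \<le> norm f - e" by force
  have K: "0 \<le> norm f - e" using H[of 0] by simp
  have "norm (blinfun_apply f x) \<le> (norm f - e) * norm x" for x
  proof (cases "x = 0")
    case True then show ?thesis by simp
  next
    case False
    define y where "y = (1 / norm x) *\<^sub>R x"
    have ny: "norm y = 1" using False by (simp add: y_def)
    have "f y \<le> norm f - e" using H ny by simp
    moreover have "- f y \<le> norm f - e" using H[of "- y"] ny by (simp add: blinfun.minus_right)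
    ultimately have "\<bar>f y\<bar> \<le> norm f - e" by linarith
    moreover have "f x = norm x * f y" using False by (simp add: y_def blinfun.scaleR_right blinfun.minus_right)
    ultimately show ?thesis using False by (simp add: abs_mult mult.commute mult_left_mono)
  qed
  then have "norm f \<le> norm f - e" using K by (intro norm_blinfun_bound) auto
  then show False using e by simp
qed

lemma pn_zero1: assumes "p > 0" "v \<ge> 0" shows "pn p 0 v = v"
  using assms by (simp add: pn_def powr_powr)

lemma rho_powr: fixes \<rho> p w :: real assumes "\<rho> > 0" "p > 0" "w \<ge> 0"
  shows "\<rho> * w powr p = (\<rho> powr (1/p) * w) powr p"
  using assms by (simp add: powr_mult powr_powr)

lemma strong_duality:
  fixes A :: "'x::banach \<Rightarrow>\<^sub>L 'y::banach"
    and B :: "'x \<Rightarrow>\<^sub>L 'z::banach"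
    and y0 :: 'y and \<rho> p p' d :: real
  assumes rho: "\<rho> > 0"
    and p: "p > 1" and p': "p' > 1" and conj: "1 / p + 1 / p' = 1"
    and dpos: "d > 0"
    and dle: "\<And>x. d \<le> pn p (norm (y0 - A x)) (\<rho> powr (1/p) * norm (B x))"
  shows "\<exists>l m. (norm l powr p' + norm m powr p') powr (1 / p') \<le> 1 \<and>
            adjoint_op A l + \<rho> powr (1 / p) *\<^sub>R adjoint_op B m = 0 \<and> dual_pair y0 l = d"
proof -
  define c where "c = \<rho> powr (1/p)"
  have c: "c > 0" using rho by (simp add: c_def)
  have conj': "1/p' + 1/p = 1" using conj by simp
  have p0: "p > 0" using p by simp
  define q :: "'y \<times> 'z \<Rightarrow> real" where "q w = pn p (norm (fst w)) (c * norm (snd w))" for w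
  have subadd: "q (w1 + w2) \<le> q w1 + q w2" for w1 w2
  proof -
    have "q (w1 + w2) \<le> pn p (norm (fst w1) + norm (fst w2)) (c * norm (snd w1) + c * norm (snd w2))"
      unfolding q_def using c p0
      by (intro pn_mono) (auto simp flip: distrib_left intro: norm_triangle_ineq mult_left_mono)
    also have "\<dots> \<le> q w1 + q w2" unfolding q_def using c p p' conj
      by (intro minkowski2[of p p']) auto
    finally show ?thesis .
  qed
  have hom: "q (t *\<^sub>R w) = t * q w" if "t \<ge> 0" for t w
  proof -
    have "q (t *\<^sub>R w) = pn p (t * norm (fst w)) (t * (c * norm (snd w)))"
      unfolding q_def using that by (simp add: algebra_simps)
    also have "\<dots> = t * q w" unfolding q_def using that c p0 by (intro pn_hom) auto
    finally show ?thesis .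
  qed
  define g0 where "g0 = {(t *\<^sub>R (y0, 0) + (A x, B x), t * d) | t x. True}"
  have g0_lsub: "lsub g0" unfolding lsub_def
  proof (intro conjI ballI allI)
    have "(0::('y \<times> 'z) \<times> real) = (0 *\<^sub>R (y0, 0) + (A 0, B 0), 0 * d)"
      by (simp add: blinfun.zero_right zero_prod_def)
    then show "0 \<in> g0" unfolding g0_def by blast
  next
    fix u w assume "u \<in> g0" "w \<in> g0"
    then obtain t x s z where "u = (t *\<^sub>R (y0, 0) + (A x, B x), t * d)"
      "w = (s *\<^sub>R (y0, 0) + (A z, B z), s * d)" unfolding g0_def by blast
    then have "u + w = ((t + s) *\<^sub>R (y0, 0) + (A (x + z), B (x + z)), (t + s) * d)"
      by (simp add: blinfun.add_right algebra_simps scaleR_add_left)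
    then show "u + w \<in> g0" unfolding g0_def by blast
  next
    fix k u assume "u \<in> g0"
    then obtain t x where "u = (t *\<^sub>R (y0, 0) + (A x, B x), t * d)" unfolding g0_def by blast
    then have "k *\<^sub>R u = ((k * t) *\<^sub>R (y0, 0) + (A (k *\<^sub>R x), B (k *\<^sub>R x)), (k * t) * d)"
      by (simp add: blinfun.scaleR_right blinfun.minus_right algebra_simps scaleR_add_right)
    then show "k *\<^sub>R u \<in> g0" unfolding g0_def by blast
  qed
  have g0_fun: "a = 0" if a0: "(0, a) \<in> g0" for a
  proof -
    obtain t x where e: "(0::'y \<times> 'z) = t *\<^sub>R (y0, 0) + (A x, B x)" "a = t * d"
      using a0 unfolding g0_def by blast
    have e1: "t *\<^sub>R y0 + A x = 0" and e2: "B x = 0" using e(1) by (auto simp: prod_eq_iff)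
    show ?thesis
    proof (cases "t = 0")
      case True then show ?thesis using e by simp
    next
      case False
      define x' where "x' = (- 1 / t) *\<^sub>R x"
      have "A x' = (- 1 / t) *\<^sub>R A x" by (simp add: x'_def blinfun.scaleR_right blinfun.minus_right)
      also have "A x = - (t *\<^sub>R y0)" using e1 by (simp add: eq_neg_iff_add_eq_0 add.commute)
      finally have "A x' = y0" using False by simp
      moreover have "B x' = 0" using e2 by (simp add: x'_def blinfun.scaleR_right blinfun.minus_right)
      ultimately have "d \<le> pn p 0 0" using dle[of x'] by simp
      then show ?thesis using dpos p0 pn_zero2[of p 0] by simp
    qed
  qed
  have g0_bd: "a \<le> q w" if wa: "(w, a) \<in> g0" for w a
  proof -
    obtain t x where e: "w = t *\<^sub>R (y0, 0) + (A x, B x)" "a = t * d"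
      using wa unfolding g0_def by blast
    show ?thesis
    proof (cases "t > 0")
      case False
      then have "a \<le> 0" using e dpos by (simp add: mult_nonpos_nonneg)
      then show ?thesis using pn_nonneg[of p] unfolding q_def by (meson order_trans)
    next
      case True
      define x' where "x' = (- 1 / t) *\<^sub>R x"
      have "fst w = t *\<^sub>R (y0 - A x')" using e True
        by (simp add: x'_def blinfun.scaleR_right blinfun.minus_right scaleR_add_right)
      moreover have "snd w = (- t) *\<^sub>R B x'" using e True
        by (simp add: x'_def blinfun.scaleR_right blinfun.minus_right)
      ultimately have n1: "norm (fst w) = t * norm (y0 - A x')"
        and n2: "c * norm (snd w) = t * (c * norm (B x'))" using True by auto
      have "q w = pn p (t * norm (y0 - A x')) (t * (c * norm (B x')))"
        unfolding q_def by (simp only: n1 n2)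
      also have "\<dots> = t * pn p (norm (y0 - A x')) (c * norm (B x'))"
        using True c p0 by (intro pn_hom) auto
      finally have "q w = t * pn p (norm (y0 - A x')) (c * norm (B x'))" .
      moreover have "t * d \<le> t * pn p (norm (y0 - A x')) (c * norm (B x'))"
        using dle[of x'] True unfolding c_def by (intro mult_left_mono) auto
      ultimately show ?thesis using e by simp
    qed
  qed
  obtain F where Flin: "linear F" and Fg0: "\<And>w a. (w, a) \<in> g0 \<Longrightarrow> F w = a"
    and Fq: "\<And>w. F w \<le> q w"
    using hahn_banach_graph[of q g0] subadd hom g0_lsub g0_fun g0_bd by blast
  have Fin: "F (t *\<^sub>R (y0, 0) + (A x, B x)) = t * d" for t x
    using Fg0 unfolding g0_def by blast
  define l where "l y = F (y, 0)" for y
  define m where "m z = F (0, z) / c" for z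
  have Fsplit: "F (y, z) = l y + c * m z" for y z
  proof -
    have "F (y, z) = F ((y, 0) + (0, z))" by simp
    also have "\<dots> = F (y, 0) + F (0, z)" by (rule linear_add[OF Flin])
    also have "\<dots> = l y + c * m z" using c by (simp add: l_def m_def)
    finally show ?thesis .
  qed
  have Fneg: "F (- w) = - F w" for w using linear_neg[OF Flin] .
  have l_bl: "bounded_linear l"
  proof (rule bounded_linear_intro[where K = 1])
    fix x y show "l (x + y) = l x + l y"
      using linear_add[OF Flin, of "(x, 0)" "(y, 0)"] by (simp add: l_def)
  next
    fix r x show "l (r *\<^sub>R x) = r *\<^sub>R l x"
      using linear_scale[OF Flin, of r "(x, 0)"] by (simp add: l_def)
  next
    fix x
    have "F (x, 0) \<le> norm x" using Fq[of "(x, 0)"] p0 by (simp add: q_def pn_zero2)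
    moreover have "- F (x, 0) \<le> norm x" using Fq[of "(- x, 0)"] Fneg[of "(x, 0)"] p0
      by (simp add: q_def pn_zero2)
    ultimately show "norm (l x) \<le> norm x * 1" by (simp add: l_def)
  qed
  have m_bl: "bounded_linear m"
  proof (rule bounded_linear_intro[where K = 1])
    fix x y show "m (x + y) = m x + m y"
      using linear_add[OF Flin, of "(0, x)" "(0, y)"] by (simp add: m_def add_divide_distrib)
  next
    fix r x show "m (r *\<^sub>R x) = r *\<^sub>R m x"
      using linear_scale[OF Flin, of r "(0, x)"] by (simp add: m_def)
  next
    fix x
    have "F (0, x) \<le> c * norm x" using Fq[of "(0, x)"] p0 c by (simp add: q_def pn_zero1)
    moreover have "- F (0, x) \<le> c * norm x" using Fq[of "(0, - x)"] Fneg[of "(0, x)"] p0 c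
      by (simp add: q_def pn_zero1)
    ultimately have "\<bar>F (0, x)\<bar> \<le> c * norm x" by linarith
    then show "norm (m x) \<le> norm x * 1" using c by (simp add: m_def divide_le_eq mult.commute)
  qed
  define lam where "lam = Blinfun l"
  define mu where "mu = Blinfun m"
  have lam_ap: "blinfun_apply lam = l" using l_bl by (simp add: lam_def bounded_linear_Blinfun_apply)
  have mu_ap: "blinfun_apply mu = m" using m_bl by (simp add: mu_def bounded_linear_Blinfun_apply)
  have constr: "adjoint_op A lam + \<rho> powr (1 / p) *\<^sub>R adjoint_op B mu = 0"
  proof (rule blinfun_eqI)
    fix x
    have "F (A x, B x) = 0" using Fin[of 0 x] by simp
    then show "blinfun_apply (adjoint_op A lam + \<rho> powr (1 / p) *\<^sub>R adjoint_op B mu) x = blinfun_apply 0 x"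
      by (simp add: adjoint_op_def lam_ap mu_ap Fsplit c_def blinfun.add_left blinfun.scaleR_left)
  qed
  have val: "dual_pair y0 lam = d"
  proof -
    have "F (1 *\<^sub>R (y0, 0) + (A 0, B 0)) = 1 * d" by (rule Fin)
    then show ?thesis by (simp add: dual_pair_def lam_ap l_def blinfun.zero_right)
  qed
  have lmq: "lam y + mu w \<le> pn p (norm y) (norm w)" for y w
  proof -
    have ms: "m ((1/c) *\<^sub>R w) = (1/c) * m w"
      using linear_scale[OF bounded_linear.linear[OF m_bl], of "1/c" w] by simp
    have "lam y + mu w = F (y, (1/c) *\<^sub>R w)" using c by (simp add: Fsplit lam_ap mu_ap ms)
    also have "\<dots> \<le> q (y, (1/c) *\<^sub>R w)" by (rule Fq)
    also have "\<dots> = pn p (norm y) (norm w)" using c by (simp add: q_def)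
    finally show ?thesis .
  qed
  have st: "s * norm lam + t * norm mu \<le> pn p s t" if s: "s \<ge> 0" and t: "t \<ge> 0" for s t
  proof (rule field_le_epsilon)
    fix e :: real assume e: "e > 0"
    define e' where "e' = e / (s + t + 1)"
    have e': "e' > 0" using e s t by (simp add: e'_def)
    obtain y where y: "norm y \<le> 1" "norm lam - e' < lam y" using approx_norm[OF e'] by blast
    obtain w where w: "norm w \<le> 1" "norm mu - e' < mu w" using approx_norm[OF e'] by blast
    have "s * norm lam + t * norm mu \<le> s * (lam y + e') + t * (mu w + e')"
      using y w s t by (intro add_mono mult_left_mono) auto
    also have "\<dots> = lam (s *\<^sub>R y) + mu (t *\<^sub>R w) + (s + t) * e'"
      by (simp add: blinfun.scaleR_right blinfun.minus_right algebra_simps)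
    also have "\<dots> \<le> pn p (norm (s *\<^sub>R y)) (norm (t *\<^sub>R w)) + (s + t) * e'"
      by (rule add_right_mono[OF lmq])
    also have "pn p (norm (s *\<^sub>R y)) (norm (t *\<^sub>R w)) \<le> pn p s t"
      using s t y w p0 by (intro pn_mono) (auto intro: mult_left_le)
    also have "(s + t) * e' \<le> e"
      using e s t by (simp add: e'_def field_simps)
    finally show "s * norm lam + t * norm mu \<le> pn p s t + e" by simp
  qed
  have "pn p' (norm lam) (norm mu) \<le> 1"
    using dual_bound[of p p' "norm lam" "norm mu"] p p' conj st by auto
  then show ?thesis using constr val unfolding pn_def by blast
qed

theorem proposition3p5:
  fixes A :: "'x::banach \<Rightarrow>\<^sub>L 'y::banach"
    and B :: "'x \<Rightarrow>\<^sub>L 'z::banach"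
    and y0 :: 'y and \<rho> p p' :: real
    and xh :: 'x and lh :: "'y \<Rightarrow>\<^sub>L real" and mh :: "'z \<Rightarrow>\<^sub>L real"
  assumes rho: "\<rho> > 0"
    and p: "p > 1" and p': "p' > 1" and conj: "1 / p + 1 / p' = 1"
    and xh_min: "(norm (y0 - A xh) powr p + \<rho> * norm (B xh) powr p) powr (1 / p)
          = (INF x. (norm (y0 - A x) powr p + \<rho> * norm (B x) powr p) powr (1 / p))"
    and min_pos: "(INF x. (norm (y0 - A x) powr p + \<rho> * norm (B x) powr p) powr (1 / p)) > 0"
    and lm_norm: "(norm lh powr p' + norm mh powr p') powr (1 / p') = 1"
    and lm_constr: "adjoint_op A lh + \<rho> powr (1 / p) *\<^sub>R adjoint_op B mh = 0"
    and lm_max: "dual_pair y0 lh = Sup {\<bar>dual_pair y0 l\<bar> | l m.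
            (norm l powr p' + norm m powr p') powr (1 / p') \<le> 1 \<and>
            adjoint_op A l + \<rho> powr (1 / p) *\<^sub>R adjoint_op B m = 0}"
    and max_pos: "Sup {\<bar>dual_pair y0 l\<bar> | l m.
            (norm l powr p' + norm m powr p') powr (1 / p') \<le> 1 \<and>
            adjoint_op A l + \<rho> powr (1 / p) *\<^sub>R adjoint_op B m = 0} > 0"
  shows "(mh = 0 \<longrightarrow> B xh = 0 \<and> norm (y0 - A xh) = dual_pair y0 lh)
    \<and> (lh \<noteq> 0 \<and> mh \<noteq> 0 \<longrightarrow>
         (let \<alpha> = (1 + norm mh powr p' / norm lh powr p') powr (1 / p) / dual_pair y0 lh;
              \<beta> = - (\<rho> powr (1 / p)) * (1 + norm lh powr p' / norm mh powr p') powr (1 / p)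
                    / dual_pair y0 lh
          in y0 - A xh \<noteq> 0 \<and> B xh \<noteq> 0 \<and>
             norming (\<alpha> *\<^sub>R (y0 - A xh)) lh \<and> norming (\<beta> *\<^sub>R B xh) mh))"
proof -
  define c where "c = \<rho> powr (1/p)"
  have c: "c > 0" using rho by (simp add: c_def)
  have p0: "p > 0" and p'0: "p' > 0" using p p' by auto
  have conj': "1/p' + 1/p = 1" using conj by simp
  define val where "val x = (norm (y0 - A x) powr p + \<rho> * norm (B x) powr p) powr (1/p)" for x
  have val_pn: "val x = pn p (norm (y0 - A x)) (c * norm (B x))" for x
    using rho_powr[of \<rho> p "norm (B x)"] rho p0 by (simp add: val_def pn_def c_def)
  define d where "d = (INF x. val x)"
  have d_eq: "val xh = d" using xh_min unfolding val_def d_def .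
  have dpos: "d > 0" using min_pos unfolding val_def d_def .
  have bdd: "bdd_below (range val)" unfolding val_def by (intro bdd_belowI[of _ 0]) auto
  have dle: "d \<le> val x" for x unfolding d_def using bdd by (rule cINF_lower) simp
  obtain l0 m0 where l0m0: "(norm l0 powr p' + norm m0 powr p') powr (1 / p') \<le> 1"
      "adjoint_op A l0 + \<rho> powr (1 / p) *\<^sub>R adjoint_op B m0 = 0" "dual_pair y0 l0 = d"
    using strong_duality[of \<rho> p p' d y0 A B] rho p p' conj dpos dle val_pn by (auto simp: c_def)
  define u where "u = norm (y0 - A xh)"
  define v where "v = c * norm (B xh)"
  have u0: "u \<ge> 0" and v0: "v \<ge> 0" using c by (auto simp: u_def v_def)
  have d_pn: "d = pn p u v" using d_eq val_pn[of xh] by (simp add: u_def v_def)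
  have iden: "l y0 = l (y0 - A xh) - c * m (B xh)"
    if "adjoint_op A l + \<rho> powr (1 / p) *\<^sub>R adjoint_op B m = 0" for l :: "'y \<Rightarrow>\<^sub>L real" and m :: "'z \<Rightarrow>\<^sub>L real"
  proof -
    have "blinfun_apply (adjoint_op A l + \<rho> powr (1 / p) *\<^sub>R adjoint_op B m) xh = 0"
      using that by simp
    then have "l (A xh) + c * m (B xh) = 0"
      by (simp add: adjoint_op_def c_def blinfun.add_left blinfun.scaleR_left)
    then show ?thesis by (simp add: blinfun.diff_right)
  qed
  have bnd: "l (y0 - A xh) - c * m (B xh) \<le> norm l * u + norm m * v" for l :: "'y \<Rightarrow>\<^sub>L real" and m :: "'z \<Rightarrow>\<^sub>L real"
  proof -
    have "l (y0 - A xh) \<le> norm l * u" using norm_blinfun[of l "y0 - A xh"] by (simp add: u_def)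
    moreover have "- m (B xh) \<le> norm m * norm (B xh)" using norm_blinfun[of m "B xh"] by simp
    then have "c * (- m (B xh)) \<le> c * (norm m * norm (B xh))" using c by (intro mult_left_mono) auto
    ultimately show ?thesis by (simp add: v_def algebra_simps)
  qed
  have weak: "\<bar>dual_pair y0 l\<bar> \<le> d"
    if cond: "(norm l powr p' + norm m powr p') powr (1 / p') \<le> 1"
      "adjoint_op A l + \<rho> powr (1 / p) *\<^sub>R adjoint_op B m = 0" for l m
  proof -
    have hold: "norm l * u + norm m * v \<le> d"
    proof -
      have "norm l * u + norm m * v \<le> pn p' (norm l) (norm m) * pn p u v"
        using holder2[of p p' "norm l" "norm m" u v] p p' conj u0 v0 by simp
      also have "\<dots> \<le> 1 * pn p u v" using cond(1) pn_nonneg[of p u v]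
        by (intro mult_right_mono) (auto simp: pn_def)
      finally show ?thesis using d_pn by simp
    qed
    have "dual_pair y0 l \<le> d" using iden[OF cond(2)] bnd[of l m] hold unfolding dual_pair_def by linarith
    moreover have "- dual_pair y0 l \<le> d"
    proof -
      have c2: "adjoint_op A (- l) + \<rho> powr (1 / p) *\<^sub>R adjoint_op B (- m) = 0"
      proof (rule blinfun_eqI)
        fix x
        have "blinfun_apply (adjoint_op A l + \<rho> powr (1 / p) *\<^sub>R adjoint_op B m) x = 0"
          using cond(2) by simp
        then show "blinfun_apply (adjoint_op A (- l) + \<rho> powr (1 / p) *\<^sub>R adjoint_op B (- m)) x = blinfun_apply 0 x"
          by (simp add: adjoint_op_def blinfun.add_left blinfun.scaleR_left blinfun.minus_left)
      qed
      have nn: "norm (- l) = norm l" "norm (- m) = norm m" by simp_all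
      have bn: "(- l) (y0 - A xh) - c * (- m) (B xh) \<le> norm l * u + norm m * v"
        using bnd[of "- l" "- m"] by (simp only: nn)
      have "dual_pair y0 (- l) \<le> d" using iden[OF c2] bn hold unfolding dual_pair_def by linarith
      then show ?thesis by (simp add: dual_pair_def blinfun.minus_left)
    qed
    ultimately show ?thesis by linarith
  qed
  define S where "S = {\<bar>dual_pair y0 l\<bar> | l m.
            (norm l powr p' + norm m powr p') powr (1 / p') \<le> 1 \<and>
            adjoint_op A l + \<rho> powr (1 / p) *\<^sub>R adjoint_op B m = 0}"
  have Sbdd: "bdd_above S" unfolding S_def using weak by (intro bdd_aboveI[of _ d]) blast
  have "d \<in> S" unfolding S_def using l0m0 dpos by (intro CollectI exI[of _ l0] exI[of _ m0]) auto
  then have "d \<le> Sup S" using Sbdd by (rule cSup_upper)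
  then have dl1: "d \<le> dual_pair y0 lh" using lm_max S_def by simp
  have "\<bar>dual_pair y0 lh\<bar> \<le> d" using weak[of lh mh] lm_norm lm_constr by simp
  then have lhd: "dual_pair y0 lh = d" using dl1 by linarith
  define a where "a = norm lh"
  define b where "b = norm mh"
  have a0: "a \<ge> 0" and b0: "b \<ge> 0" by (auto simp: a_def b_def)
  have pnab: "pn p' a b = 1" using lm_norm by (simp add: pn_def a_def b_def)
  have ab1: "a powr p' + b powr p' = 1" using pn_powr[of p' a b] pnab p'0 by simp
  have hol: "a * u + b * v \<le> d"
    using holder2[of p p' a b u v] p p' conj u0 v0 a0 b0 pnab d_pn by simp
  have h1: "lh (y0 - A xh) \<le> a * u" using norm_blinfun[of lh "y0 - A xh"] by (simp add: u_def a_def)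
  have h2: "- c * mh (B xh) \<le> b * v"
  proof -
    have "- mh (B xh) \<le> b * norm (B xh)" using norm_blinfun[of mh "B xh"] by (simp add: b_def)
    then have "c * (- mh (B xh)) \<le> c * (b * norm (B xh))" using c by (intro mult_left_mono) auto
    then show ?thesis by (simp add: v_def algebra_simps)
  qed
  have idh: "d = lh (y0 - A xh) - c * mh (B xh)" using iden[OF lm_constr] lhd unfolding dual_pair_def by linarith
  have e1: "lh (y0 - A xh) = a * u" using h1 h2 hol idh by linarith
  have e2: "- c * mh (B xh) = b * v" using h1 h2 hol idh by linarith
  have e3: "a * u + b * v = d" using h1 h2 hol idh by linarith
  have part1: "mh = 0 \<longrightarrow> B xh = 0 \<and> norm (y0 - A xh) = dual_pair y0 lh"
  proof
    assume "mh = 0"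
    then have b: "b = 0" by (simp add: b_def)
    then have "a powr p' = 1" using ab1 p'0 by simp
    moreover have "a = (a powr p') powr (1/p')" using a0 p'0 by (simp add: powr_powr)
    ultimately have "a = 1" by simp
    then have ud: "u = d" using e3 b by simp
    have pu: "pn p u v = u" using d_pn ud by linarith
    have "u powr p = u powr p + v powr p" using pn_powr[of p u v] p0 by (simp add: pu)
    then have "v = 0" using v0 by simp
    then have "B xh = 0" using c by (simp add: v_def)
    then show "B xh = 0 \<and> norm (y0 - A xh) = dual_pair y0 lh" using ud lhd by (simp add: u_def)
  qed
  have part2: "lh \<noteq> 0 \<and> mh \<noteq> 0 \<longrightarrow>
         (let \<alpha> = (1 + norm mh powr p' / norm lh powr p') powr (1 / p) / dual_pair y0 lh;
              \<beta> = - (\<rho> powr (1 / p)) * (1 + norm lh powr p' / norm mh powr p') powr (1 / p)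
                    / dual_pair y0 lh
          in y0 - A xh \<noteq> 0 \<and> B xh \<noteq> 0 \<and>
             norming (\<alpha> *\<^sub>R (y0 - A xh)) lh \<and> norming (\<beta> *\<^sub>R B xh) mh)"
  proof
    assume "lh \<noteq> 0 \<and> mh \<noteq> 0"
    then have a: "a > 0" and b: "b > 0" by (auto simp: a_def b_def)
    define U where "U = u / d"
    define V where "V = v / d"
    have U0: "U \<ge> 0" and V0: "V \<ge> 0" using u0 v0 dpos by (auto simp: U_def V_def)
    have UV: "U powr p + V powr p = 1"
    proof -
      have "U powr p + V powr p = (u powr p + v powr p) / d powr p"
        using u0 v0 dpos by (simp add: U_def V_def powr_divide add_divide_distrib)
      also have "u powr p + v powr p = d powr p" using pn_powr[of p u v] p0 by (simp add: d_pn)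
      finally show ?thesis using dpos by simp
    qed
    have aUbV: "a * U + b * V = 1" using e3 dpos by (simp add: U_def V_def field_simps)
    have y1: "a * U \<le> a powr p' / p' + U powr p / p"
      using Youngs_inequality[of p' p a U] p p' conj' a U0 by simp
    have y2: "b * V \<le> b powr p' / p' + V powr p / p"
      using Youngs_inequality[of p' p b V] p p' conj' b V0 by simp
    have "a powr p' / p' + U powr p / p + (b powr p' / p' + V powr p / p)
        = (a powr p' + b powr p') / p' + (U powr p + V powr p) / p"
      by (simp add: add_divide_distrib)
    also have "\<dots> = 1" using ab1 UV conj' by simp
    finally have sum1: "a powr p' / p' + U powr p / p + (b powr p' / p' + V powr p / p) = 1" .
    have eqU: "a * U = a powr p' / p' + U powr p / p" using y1 y2 sum1 aUbV by linarith
    have eqV: "b * V = b powr p' / p' + V powr p / p" using y1 y2 sum1 aUbV by linarith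
    have Up: "U powr p = a powr p'" using young_eq[of p p' a U] p p' conj a U0 eqU by simp
    have Vp: "V powr p = b powr p'" using young_eq[of p p' b V] p p' conj b V0 eqV by simp
    have "U = (U powr p) powr (1/p)" using U0 p0 by (simp add: powr_powr)
    then have Ueq: "U = (a powr p') powr (1/p)" using Up by simp
    have "V = (V powr p) powr (1/p)" using V0 p0 by (simp add: powr_powr)
    then have Veq: "V = (b powr p') powr (1/p)" using Vp by simp
    have Upos: "U > 0" using Ueq a by simp
    have Vpos: "V > 0" using Veq b by simp
    have uU: "u = U * d" and vV: "v = V * d" using dpos by (auto simp: U_def V_def)
    have upos: "u > 0" using Upos dpos uU by simp
    have vpos: "v > 0" using Vpos dpos vV by simp
    have ap: "a powr p' > 0" and bp: "b powr p' > 0" using a b by auto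
    have alpha: "(1 + b powr p' / a powr p') powr (1/p) / d = 1 / u"
    proof -
      have "1 + b powr p' / a powr p' = 1 / a powr p'" using ab1 ap by (simp add: field_simps)
      then have "(1 + b powr p' / a powr p') powr (1/p) = 1 / U"
        using ap Ueq by (simp add: powr_divide)
      then show ?thesis using uU by simp
    qed
    have beta: "- c * (1 + a powr p' / b powr p') powr (1/p) / d = - c / v"
    proof -
      have "1 + a powr p' / b powr p' = 1 / b powr p'" using ab1 bp by (simp add: field_simps)
      then have "(1 + a powr p' / b powr p') powr (1/p) = 1 / V"
        using bp Veq by (simp add: powr_divide)
      then show ?thesis using vV by simp
    qed
    have nB: "norm (B xh) = v / c" using c by (simp add: v_def)
    show "let \<alpha> = (1 + norm mh powr p' / norm lh powr p') powr (1 / p) / dual_pair y0 lh;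
              \<beta> = - (\<rho> powr (1 / p)) * (1 + norm lh powr p' / norm mh powr p') powr (1 / p)
                    / dual_pair y0 lh
          in y0 - A xh \<noteq> 0 \<and> B xh \<noteq> 0 \<and>
             norming (\<alpha> *\<^sub>R (y0 - A xh)) lh \<and> norming (\<beta> *\<^sub>R B xh) mh"
      unfolding Let_def norming_def dual_pair_def lhd[unfolded dual_pair_def]
      unfolding a_def[symmetric] b_def[symmetric] c_def[symmetric] alpha beta
    proof (intro conjI)
      show "y0 - A xh \<noteq> 0" using upos by (auto simp: u_def)
      show "B xh \<noteq> 0" using vpos by (auto simp: v_def)
      show "norm ((1 / u) *\<^sub>R (y0 - A xh)) = 1" using upos by (simp add: u_def)
      show "lh ((1 / u) *\<^sub>R (y0 - A xh)) = a" using upos e1 by (simp add: blinfun.scaleR_right)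
      show "norm ((- c / v) *\<^sub>R B xh) = 1" using vpos c nB by simp
      have "mh ((- c / v) *\<^sub>R B xh) = (- c / v) * mh (B xh)"
        by (rule blinfun.scaleR_right[of mh "- c / v" "B xh", unfolded real_scaleR_def])
      also have "\<dots> = (- c * mh (B xh)) / v" by simp
      also have "\<dots> = b" using e2 vpos by simp
      finally show "mh ((- c / v) *\<^sub>R B xh) = b" .
    qed
  qed
  show ?thesis using part1 part2 by blast
qed

end
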